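(* Let $k,\ell,n$ be positive integers with $k+\ell=n$ and let $M,B,N>0$. Let $A$ be the symmetric $n\times n$ matrix whose first $k$ rows all equal $(M,\dots,M,B,\dots,B)$ ($k$ entries $M$ followed by $\ell$ entries $B$) and whose last $\ell$ rows all equal $(B,\dots,B,N,\dots,N)$ ($k$ entries $B$ followed by $\ell$ entries $N$). Put $t=MN/B^2$. Then the Sinkhorn limit $S(A)$ is the block matrix whose entries in the upper-left $k\times k$ block all equal $a$, whose entries in the two off-diagonal blocks ($k\times\ell$ and $\ell\times k$) all equal $b$, and whose entries in the lower-right $\ell\times\ell$ block all equal $c$, where: if $t=1$, then $a=b=c=1/n$; and if $t\neq 1$, then \[ a=\frac1k+\frac{n-\sqrt{4k\ell t+(k-\ell)^2}}{2k^2(t-1)},\qquad b=\frac{1-ka}{\ell},\qquad c=\frac{1-kb}{\ell}=\frac{\ell-k+k^2a}{\ell^2}. \] In particular $S(A)$ depends only on the ratio $MN/B^2$.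
   Context: A matrix is doubly stochastic if it is nonnegative with all row and column sums equal to $1$. For a positive $n\times n$ matrix $A$ there exist positive diagonal matrices $X,Y$ with $XAY$ doubly stochastic, and this matrix $XAY$ is unique; it is called the Sinkhorn limit $S(A)$. For symmetric positive $A$ one may take $Y=X$. *)

theory Defs
  imports "HOL-Analysis.Analysis"
begin

text \<open>n x n real matrices are represented as functions nat => nat => real,
  with only the indices i, j < n being relevant (0-based indexing).\<close>

definition doubly_stochastic :: "nat \<Rightarrow> (nat \<Rightarrow> nat \<Rightarrow> real) \<Rightarrow> bool" where
  "doubly_stochastic n S \<longleftrightarrow>
     (\<forall>i<n. \<forall>j<n. S i j \<ge> 0) \<and>
     (\<forall>i<n. (\<Sum>j<n. S i j) = 1) \<and>
     (\<forall>j<n. (\<Sum>i<n. S i j) = 1)"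

definition diag_scaling :: "nat \<Rightarrow> (nat \<Rightarrow> nat \<Rightarrow> real) \<Rightarrow> (nat \<Rightarrow> nat \<Rightarrow> real) \<Rightarrow> bool" where
  "diag_scaling n A S \<longleftrightarrow>
     (\<exists>x y :: nat \<Rightarrow> real. (\<forall>i<n. x i > 0) \<and> (\<forall>j<n. y j > 0) \<and>
        (\<forall>i<n. \<forall>j<n. S i j = x i * A i j * y j)) \<and>
     (\<forall>i j. \<not> (i < n \<and> j < n) \<longrightarrow> S i j = 0)"

definition sinkhorn_limit :: "nat \<Rightarrow> (nat \<Rightarrow> nat \<Rightarrow> real) \<Rightarrow> (nat \<Rightarrow> nat \<Rightarrow> real)" where
  "sinkhorn_limit n A = (THE S. diag_scaling n A S \<and> doubly_stochastic n S)"

end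

theory Submission
  imports Defs
begin

lemma ds_unique:
  assumes pos: "\<forall>i<n. \<forall>j<n. A i j > 0"
    and d1: "diag_scaling n A S" and s1: "doubly_stochastic n S"
    and d2: "diag_scaling n A S'" and s2: "doubly_stochastic n S'"
  shows "S' = S"
proof (intro ext)
  fix i j
  show "S' i j = S i j"
  proof (cases "i < n \<and> j < n")
    case False
    then show ?thesis using d1 d2 unfolding diag_scaling_def by auto
  next
    case True
    obtain x y where x: "\<forall>i<n. x i > 0" and y: "\<forall>j<n. y j > 0"
      and S: "\<forall>i<n. \<forall>j<n. S i j = x i * A i j * y j"
      using d1 unfolding diag_scaling_def by blast
    obtain x' y' where x': "\<forall>i<n. x' i > 0" and y': "\<forall>j<n. y' j > 0"
      and S': "\<forall>i<n. \<forall>j<n. S' i j = x' i * A i j * y' j"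
      using d2 unfolding diag_scaling_def by blast
    define d where "d i = x' i / x i" for i
    define e where "e j = y' j / y j" for j
    have dpos: "d i > 0" if "i < n" for i using x x' that unfolding d_def by auto
    have epos: "e j > 0" if "j < n" for j using y y' that unfolding e_def by auto
    have Spos: "S i j > 0" if "i < n" "j < n" for i j using S x y pos that by auto
    have S'eq: "S' i j = d i * S i j * e j" if "i < n" "j < n" for i j
      using S S' x y that unfolding d_def e_def by (auto simp: field_simps)
    have rowS: "(\<Sum>j<n. S i j) = 1" if "i < n" for i using s1 that unfolding doubly_stochastic_def by auto
    have colS: "(\<Sum>i<n. S i j) = 1" if "j < n" for j using s1 that unfolding doubly_stochastic_def by auto
    have rowS': "(\<Sum>j<n. d i * S i j * e j) = 1" if "i < n" for i
    proof -
      have "(\<Sum>j<n. d i * S i j * e j) = (\<Sum>j<n. S' i j)" using S'eq that by (intro sum.cong) auto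
      then show ?thesis using s2 that unfolding doubly_stochastic_def by auto
    qed
    have colS': "(\<Sum>i<n. d i * S i j * e j) = 1" if "j < n" for j
    proof -
      have "(\<Sum>i<n. d i * S i j * e j) = (\<Sum>i<n. S' i j)" using S'eq that by (intro sum.cong) auto
      then show ?thesis using s2 that unfolding doubly_stochastic_def by auto
    qed
    have ne: "{..<n} \<noteq> {}" using True by auto
    have "Max (d ` {..<n}) \<in> d ` {..<n}" by (rule Max_in) (use ne in auto)
    then obtain i0 where i0: "i0 < n" "d i0 = Max (d ` {..<n})" by auto
    have dle: "d i \<le> d i0" if "i < n" for i using i0 that by auto
    have "Min (e ` {..<n}) \<in> e ` {..<n}" by (rule Min_in) (use ne in auto)
    then obtain j0 where j0: "j0 < n" "e j0 = Min (e ` {..<n})" by auto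
    have ege: "e j0 \<le> e j" if "j < n" for j using j0 that by auto
    have le1: "d i0 * e j0 \<le> 1"
    proof -
      have "(\<Sum>j<n. d i0 * S i0 j * e j0) \<le> (\<Sum>j<n. d i0 * S i0 j * e j)"
        using ege dpos[OF i0(1)] Spos[OF i0(1)]
        by (intro sum_mono) (auto intro!: mult_left_mono)
      also have "\<dots> = 1" using rowS'[OF i0(1)] by simp
      also have "(\<Sum>j<n. d i0 * S i0 j * e j0) = d i0 * e j0 * (\<Sum>j<n. S i0 j)"
        by (simp add: sum_distrib_left sum_distrib_right algebra_simps)
      finally show ?thesis using rowS[OF i0(1)] by simp
    qed
    have ge1: "d i0 * e j0 \<ge> 1"
    proof -
      have "1 = (\<Sum>i<n. d i * S i j0 * e j0)" using colS'[OF j0(1)] by simp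
      also have "\<dots> \<le> (\<Sum>i<n. d i0 * S i j0 * e j0)"
        using dle epos[OF j0(1)] Spos[OF _ j0(1)]
        by (intro sum_mono) (auto intro!: mult_right_mono)
      also have "\<dots> = d i0 * e j0 * (\<Sum>i<n. S i j0)"
        by (simp add: sum_distrib_left sum_distrib_right algebra_simps)
      finally show ?thesis using colS[OF j0(1)] by simp
    qed
    have eq1: "d i0 * e j0 = 1" using le1 ge1 by simp
    have "(\<Sum>j<n. d i0 * S i0 j * (e j - e j0)) = (\<Sum>j<n. d i0 * S i0 j * e j) - d i0 * e j0 * (\<Sum>j<n. S i0 j)"
      by (simp add: sum_subtractf sum_distrib_left sum_distrib_right algebra_simps)
    also have "\<dots> = 0" using rowS'[OF i0(1)] rowS[OF i0(1)] eq1 by simp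
    finally have z: "(\<Sum>j<n. d i0 * S i0 j * (e j - e j0)) = 0" .
    have nn: "\<forall>j\<in>{..<n}. 0 \<le> d i0 * S i0 j * (e j - e j0)"
      using dpos[OF i0(1)] Spos[OF i0(1)] ege
      by (metis diff_ge_0_iff_ge less_eq_real_def lessThan_iff mult_nonneg_nonneg)
    have "\<forall>j\<in>{..<n}. d i0 * S i0 j * (e j - e j0) = 0"
      using sum_nonneg_eq_0_iff[of "{..<n}" "\<lambda>j. d i0 * S i0 j * (e j - e j0)"] nn z by blast
    then have econst: "e jj = e j0" if "jj < n" for jj
    proof -
      assume h: "\<forall>j\<in>{..<n}. d i0 * S i0 j * (e j - e j0) = 0"
      have "d i0 * S i0 jj * (e jj - e j0) = 0" using h that by blast
      then show ?thesis using dpos[OF i0(1)] Spos[OF i0(1) that] by simp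
    qed
    have dconst: "d i * e j0 = 1" if "i < n" for i
    proof -
      have "1 = (\<Sum>j<n. d i * S i j * e j)" using rowS' that by auto
      also have "\<dots> = (\<Sum>j<n. d i * e j0 * S i j)" using econst by (intro sum.cong) auto
      also have "\<dots> = d i * e j0" using rowS[OF that] by (simp add: sum_distrib_left[symmetric])
      finally show ?thesis by simp
    qed
    show ?thesis using True S'eq econst dconst by simp
  qed
qed

lemma block_sum:
  fixes u v :: real
  shows "(\<Sum>j<k+l. if j < k then u else v) = real k * u + real l * v"
proof (induction l)
  case 0
  then show ?case by simp
next
  case (Suc l)
  then show ?case by (simp add: algebra_simps)
qed

lemma a1: "(K::real) > 0 \<Longrightarrow> L > 0 \<Longrightarrow> 1 / (K + L) = (K - L + (K + L)) / (K * (K + L + (K + L)))"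
proof -
  assume K: "K > 0" and L: "L > 0"
  have e1: "K - L + (K + L) = 2 * K" by simp
  have e2: "K * (K + L + (K + L)) = 2 * K * (K + L)" by (simp add: algebra_simps)
  show ?thesis unfolding e1 e2 using K L by simp
qed
lemma c1: "(K::real) > 0 \<Longrightarrow> L > 0 \<Longrightarrow> 1 / (K + L) = (L - K + (K + L)) / (L * (K + L + (K + L)))"
proof -
  assume K: "K > 0" and L: "L > 0"
  have e1: "L - K + (K + L) = 2 * L" by simp
  have e2: "L * (K + L + (K + L)) = 2 * L * (K + L)" by (simp add: algebra_simps)
  show ?thesis unfolding e1 e2 using K L by simp
qed
lemma b1: "(K::real) > 0 \<Longrightarrow> L > 0 \<Longrightarrow> 1 / (K + L) = 2 / (K + L + (K + L))"
  by (simp add: field_simps)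

lemma aux: "(d::real) \<noteq> 0 \<Longrightarrow> K > 0 \<Longrightarrow> L > 0 \<Longrightarrow> P > 0 \<Longrightarrow>
   (- d) / (K * d * P / (2 * L)) = - 2 * L / (K * P)"
  by (simp add: field_simps)

lemma aux2: "(K::real) > 0 \<Longrightarrow> K + L + r > 0 \<Longrightarrow>
   1 / K + - 2 * L / (K * (K + L + r)) = (K - L + r) / (K * (K + L + r))"
proof -
  assume K: "K > 0" and P: "K + L + r > 0"
  define Q where "Q = K + L + r"
  have Q: "Q > 0" using P Q_def by simp
  have e: "K - L + r = Q - 2 * L" unfolding Q_def by simp
  show ?thesis unfolding Q_def[symmetric] e using K Q by (simp add: field_simps)
qed

theorem mainTheorem5:
  fixes k l n :: nat and M B N :: real
  assumes "k > 0" and "l > 0" and "k + l = n"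
    and "M > 0" and "B > 0" and "N > 0"
  defines "A \<equiv> (\<lambda>i j. if i < k then (if j < k then M else B)
                         else (if j < k then B else N))"
  defines "t \<equiv> M * N / B\<^sup>2"
  defines "a \<equiv> (if t = 1 then 1 / real n
                else 1 / real k + (real n - sqrt (4 * real k * real l * t + (real k - real l)\<^sup>2))
                                 / (2 * (real k)\<^sup>2 * (t - 1)))"
  defines "b \<equiv> (if t = 1 then 1 / real n else (1 - real k * a) / real l)"
  defines "c \<equiv> (if t = 1 then 1 / real n else (1 - real k * b) / real l)"
  shows "(\<forall>i<n. \<forall>j<n. sinkhorn_limit n A i j =
            (if i < k then (if j < k then a else b) else (if j < k then b else c)))
         \<and> (t \<noteq> 1 \<longrightarrow> c = (real l - real k + (real k)\<^sup>2 * a) / (real l)\<^sup>2)"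
proof -
  define K where "K = real k"
  define L where "L = real l"
  define r where "r = sqrt (4 * K * L * t + (K - L)\<^sup>2)"
  have K: "K > 0" and L: "L > 0" using assms(1,2) unfolding K_def L_def by auto
  have nKL: "real n = K + L" using assms(3) unfolding K_def L_def by auto
  have tpos: "t > 0" unfolding t_def using assms(4-6) by simp
  have D: "4 * K * L * t + (K - L)\<^sup>2 > 0" using K L tpos
    by (metis add_pos_nonneg mult_pos_pos zero_less_numeral zero_le_power2)
  have r0: "r \<ge> 0" unfolding r_def using D by (intro real_sqrt_ge_zero) simp
  have r2: "r\<^sup>2 = 4 * K * L * t + (K - L)\<^sup>2" unfolding r_def using D by simp
  have rKL: "r > K - L" "r > L - K"
  proof -
    have "(K - L)\<^sup>2 < r\<^sup>2" using r2 K L tpos by simp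
    then have "\<bar>K - L\<bar> < r" using r0 by (metis abs_of_nonneg power2_abs power_less_imp_less_base)
    then show "r > K - L" "r > L - K" by auto
  qed
  have nr: "K + L + r > 0" using K L r0 by simp
  have pp: "K * K > 0" "K * L > 0" "L * K > 0" "L * L > 0" using K L by auto
  have aeq: "a = (K - L + r) / (K * (K + L + r))"
  proof (cases "t = 1")
    case True
    then have "r\<^sup>2 = (K + L)\<^sup>2" using r2 by (simp add: power2_eq_square algebra_simps)
    then have "r = K + L" using r0 K L by (simp add: power2_eq_iff_nonneg)
    then show ?thesis unfolding a_def using True nKL a1[OF K L] by simp
  next
    case False
    have t1: "t - 1 = (r\<^sup>2 - (K + L)\<^sup>2) / (4 * K * L)" using r2 K L
      by (simp add: field_simps power2_eq_square)
    have rne: "r \<noteq> K + L"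
    proof
      assume "r = K + L"
      then have "t - 1 = 0" using t1 by simp
      then show False using False by simp
    qed
    have q: "(K + L - r) / (2 * K\<^sup>2 * (t - 1)) = - 2 * L / (K * (K + L + r))"
    proof -
      have t4: "r\<^sup>2 - (K + L)\<^sup>2 = 4 * K * L * (t - 1)"
        using r2 by (simp add: power2_eq_square algebra_simps)
      have "K * (r - (K + L)) * (K + L + r) / (2 * L) = K * (r\<^sup>2 - (K + L)\<^sup>2) / (2 * L)"
        by (simp add: power2_eq_square algebra_simps)
      also have "\<dots> = K * (4 * K * L * (t - 1)) / (2 * L)" using t4 by simp
      also have "\<dots> = 2 * K\<^sup>2 * (t - 1)" using L by (simp add: power2_eq_square)
      finally have h: "2 * K\<^sup>2 * (t - 1) = K * (r - (K + L)) * (K + L + r) / (2 * L)" by simp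
      have dz: "r - (K + L) \<noteq> 0" using rne by simp
      have e: "K + L - r = - (r - (K + L))" by simp
      show ?thesis unfolding h e by (rule aux[OF dz K L nr])
    qed
    have "a = 1 / K + (K + L - r) / (2 * K\<^sup>2 * (t - 1))"
      unfolding a_def r_def[symmetric] K_def[symmetric] L_def[symmetric] using False nKL by simp
    also have "\<dots> = 1 / K + - 2 * L / (K * (K + L + r))" unfolding q ..
    also have "\<dots> = (K - L + r) / (K * (K + L + r))" by (rule aux2[OF K nr])
    finally show ?thesis .
  qed
  define P where "P = K + L + r"
  have P: "P > 0" using nr P_def by simp
  have rP: "r = P - K - L" unfolding P_def by simp
  have aP: "a = (P - 2 * L) / (K * P)" using aeq unfolding rP by simp
  have PL: "P - 2 * L > 0" and PK: "P - 2 * K > 0" using rKL unfolding rP by auto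
  have bP: "b = 2 / P"
  proof (cases "t = 1")
    case True
    then have "r\<^sup>2 = (K + L)\<^sup>2" using r2 by (simp add: power2_eq_square algebra_simps)
    then have "r = K + L" using r0 K L by (simp add: power2_eq_iff_nonneg)
    then show ?thesis unfolding b_def P_def using True nKL b1[OF K L] by simp
  next
    case False
    then show ?thesis unfolding b_def K_def[symmetric] L_def[symmetric] using aP K L P
      by (simp add: field_simps)
  qed
  have cP: "c = (P - 2 * K) / (L * P)"
  proof (cases "t = 1")
    case True
    then have "r\<^sup>2 = (K + L)\<^sup>2" using r2 by (simp add: power2_eq_square algebra_simps)
    then have "r = K + L" using r0 K L by (simp add: power2_eq_iff_nonneg)
    then show ?thesis unfolding c_def P_def using True nKL c1[OF K L] by (simp add: algebra_simps)
  next
    case False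
    then show ?thesis unfolding c_def K_def[symmetric] L_def[symmetric] using bP K L P
      by (simp add: field_simps)
  qed
  have apos: "a > 0" using aP PL K P by simp
  have bpos: "b > 0" using bP P by simp
  have cpos: "c > 0" using cP PK L P by simp
  have row1: "K * a + L * b = 1" unfolding aP bP using K P by (simp add: field_simps)
  have row2: "K * b + L * c = 1" unfolding cP bP using L P by (simp add: field_simps)
  have acb: "a * c = b\<^sup>2 * t"
  proof -
    have key: "(P - 2 * L) * (P - 2 * K) = 4 * K * L * t"
    proof -
      have "(P - 2 * L) * (P - 2 * K) = r\<^sup>2 - (K - L)\<^sup>2" unfolding rP
        by (simp add: power2_eq_square algebra_simps)
      then show ?thesis using r2 by simp
    qed
    have "a * c = (P - 2 * L) * (P - 2 * K) / (K * L * P\<^sup>2)"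
      using aP cP by (simp add: power2_eq_square mult_ac)
    also have "\<dots> = 4 * K * L * t / (K * L * P\<^sup>2)" unfolding key ..
    also have "\<dots> = b\<^sup>2 * t" unfolding bP using K L P by (simp add: field_simps power2_eq_square)
    finally show ?thesis .
  qed
  have sq: "sqrt (a / M) * sqrt (c / N) = b / B"
  proof -
    have "a / M * (c / N) = (b / B)\<^sup>2" using acb assms(4-6) unfolding t_def
      by (simp add: field_simps power2_eq_square)
    then have "sqrt (a / M * (c / N)) = b / B" using bpos assms(5) by simp
    then show ?thesis using real_sqrt_mult[of "a / M" "c / N"] by simp
  qed
  define T where "T = (\<lambda>i j. if i < k then (if j < k then a else b) else (if j < k then b else c))"
  define S0 where "S0 = (\<lambda>i j. if i < n \<and> j < n then T i j else 0)"
  have posA: "\<forall>i<n. \<forall>j<n. A i j > 0" unfolding A_def using assms(4-6) by auto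
  have dsS0: "diag_scaling n A S0"
  proof -
    define x where "x = (\<lambda>i. if i < k then sqrt (a / M) else sqrt (c / N))"
    have "\<forall>i<n. x i > 0" unfolding x_def using apos cpos assms(4,6) by auto
    moreover have "\<forall>i<n. \<forall>j<n. S0 i j = x i * A i j * x j"
    proof (intro allI impI)
      fix i j assume "i < n" "j < n"
      have aa: "sqrt (a / M) * M * sqrt (a / M) = a"
      proof -
        have "sqrt (a / M) * M * sqrt (a / M) = (sqrt (a / M) * sqrt (a / M)) * M" by (simp add: mult_ac)
        also have "\<dots> = a" using apos assms(4) by simp
        finally show ?thesis .
      qed
      have cc: "sqrt (c / N) * N * sqrt (c / N) = c"
      proof -
        have "sqrt (c / N) * N * sqrt (c / N) = (sqrt (c / N) * sqrt (c / N)) * N" by (simp add: mult_ac)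
        also have "\<dots> = c" using cpos assms(6) by simp
        finally show ?thesis .
      qed
      have b1: "sqrt (a / M) * B * sqrt (c / N) = b" using sq assms(5) by (simp add: field_simps)
      have b2: "sqrt (c / N) * B * sqrt (a / M) = b" using sq assms(5) by (simp add: field_simps)
      show "S0 i j = x i * A i j * x j"
        unfolding S0_def T_def x_def A_def using \<open>i < n\<close> \<open>j < n\<close> aa cc b1 b2 by auto
    qed
    moreover have "\<forall>i j. \<not> (i < n \<and> j < n) \<longrightarrow> S0 i j = 0" unfolding S0_def by auto
    ultimately show ?thesis unfolding diag_scaling_def by blast
  qed
  have dstS0: "doubly_stochastic n S0"
  proof -
    have "\<forall>i<n. \<forall>j<n. S0 i j \<ge> 0" unfolding S0_def T_def using apos bpos cpos by auto
    moreover have "(\<Sum>j<n. S0 i j) = 1" if "i < n" for i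
    proof -
      have "(\<Sum>j<n. S0 i j) = (\<Sum>j<k+l. if j < k then T i 0 else T i k)"
        using that assms(1,3) unfolding S0_def T_def by (intro sum.cong) auto
      also have "\<dots> = 1" unfolding block_sum T_def
        using row1 row2 assms(1) unfolding K_def L_def by auto
      finally show ?thesis .
    qed
    moreover have "(\<Sum>i<n. S0 i j) = 1" if "j < n" for j
    proof -
      have "(\<Sum>i<n. S0 i j) = (\<Sum>i<k+l. if i < k then T 0 j else T k j)"
        using that assms(1,3) unfolding S0_def T_def by (intro sum.cong) auto
      also have "\<dots> = 1" unfolding block_sum T_def
        using row1 row2 assms(1) unfolding K_def L_def by (auto simp: algebra_simps)
      finally show ?thesis .
    qed
    ultimately show ?thesis unfolding doubly_stochastic_def by blast
  qed
  have lim: "sinkhorn_limit n A = S0"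
    unfolding sinkhorn_limit_def
  proof (rule the_equality)
    show "diag_scaling n A S0 \<and> doubly_stochastic n S0" using dsS0 dstS0 by simp
    fix S assume "diag_scaling n A S \<and> doubly_stochastic n S"
    then show "S = S0" using ds_unique[OF posA dsS0 dstS0] by blast
  qed
  have part2: "t \<noteq> 1 \<longrightarrow> c = (real l - real k + (real k)\<^sup>2 * a) / (real l)\<^sup>2"
    unfolding c_def b_def using L unfolding L_def by (auto simp: field_simps power2_eq_square)
  show ?thesis using lim part2 unfolding S0_def T_def by simp
qed

end
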